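(* Let $m,n$ be positive integers and equip the special orthogonal group $\mathrm{SO}(m+n)$ with the bi-invariant Riemannian metric given on its Lie algebra $\mathfrak{so}(m+n)$ by $g(X,Y)=\operatorname{trace}(X^tY)$. For $x\in\mathrm{SO}(m+n)$ let $x_{ij}$ denote its matrix entries, and for $1\le j,\alpha\le m+n$ define $\hat\phi_{j\alpha}:\mathrm{SO}(m+n)\to\mathbb{R}$ by $$\hat\phi_{j\alpha}(x)=\sum_{t=1}^{m}x_{jt}\,x_{\alpha t}.$$ Then for all $1\le j,k,\alpha,\beta\le m+n$, the tension field $\hat\tau$ and the conformality operator $\hat\kappa$ on $\mathrm{SO}(m+n)$ satisfy $$\hat\tau(\hat\phi_{j\alpha})=-(m+n)\,\hat\phi_{j\alpha}+\delta_{j\alpha}\, m,$$ $$\hat\kappa(\hat\phi_{j\alpha},\hat\phi_{k\beta})=-\big(\hat\phi_{j\beta}\,\hat\phi_{k\alpha}+\hat\phi_{jk}\,\hat\phi_{\alpha\beta}\big)+\tfrac12\big(\delta_{jk}\,\hat\phi_{\alpha\beta}+\delta_{\alpha\beta}\,\hat\phi_{jk}+\delta_{j\beta}\,\hat\phi_{k\alpha}+\delta_{k\alpha}\,\hat\phi_{j\beta}\big).$$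
   Context: For a Riemannian manifold $(M,g)$, extend $g$ complex-bilinearly to the complexified tangent bundle. The tension field (Laplace–Beltrami operator) acts on complex-valued functions by $\tau(\phi)=\operatorname{div}(\nabla\phi)$, locally $\tau(\phi)=\sum_{i,j}\frac{1}{\sqrt{|g|}}\partial_{x_j}\big(g^{ij}\sqrt{|g|}\,\partial_{x_i}\phi\big)$, and the conformality operator is the complex-bilinear form $\kappa(\phi,\psi)=g(\nabla\phi,\nabla\psi)=\sum_{i,j}g^{ij}\partial_{x_i}\phi\,\partial_{x_j}\psi$. $\delta$ denotes the Kronecker delta. *)

theory Defs
  imports "HOL-Analysis.Analysis"
begin

text \<open>Real N x N matrices are represented as functions nat => nat => real;
  only entries with indices below N are meaningful (0-based indexing).\<close>

type_synonym rmat = "nat \<Rightarrow> nat \<Rightarrow> real"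

definition mmult :: "nat \<Rightarrow> rmat \<Rightarrow> rmat \<Rightarrow> rmat" where
  "mmult N A B = (\<lambda>i j. \<Sum>k<N. A i k * B k j)"

definition mid :: rmat where
  "mid = (\<lambda>i j. if i = j then 1 else 0)"

definition mtrans :: "rmat \<Rightarrow> rmat" where
  "mtrans A = (\<lambda>i j. A j i)"

fun mpow :: "nat \<Rightarrow> rmat \<Rightarrow> nat \<Rightarrow> rmat" where
  "mpow N A 0 = mid"
| "mpow N A (Suc k) = mmult N (mpow N A k) A"

definition mexp :: "nat \<Rightarrow> rmat \<Rightarrow> rmat" where
  "mexp N A = (\<lambda>i j. \<Sum>k. mpow N A k i j / fact k)"

definition mdet :: "nat \<Rightarrow> rmat \<Rightarrow> real" where
  "mdet N A = (\<Sum>p\<in>{p. p permutes {..<N}}. of_int (sign p) * (\<Prod>i<N. A i (p i)))"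

definition SO :: "nat \<Rightarrow> rmat set" where
  "SO N = {x. (\<forall>i j. (N \<le> i \<or> N \<le> j) \<longrightarrow> x i j = 0)
              \<and> (\<forall>i<N. \<forall>j<N. mmult N (mtrans x) x i j = mid i j)
              \<and> mdet N x = 1}"

text \<open>Orthonormal basis of so(N) w.r.t. g(X,Y) = trace(X^t Y):
  Y_rs = (E_rs - E_sr)/sqrt 2 for r < s < N.\<close>
definition soBasis :: "nat \<Rightarrow> nat \<Rightarrow> rmat" where
  "soBasis r s = (\<lambda>i j. (if i = r \<and> j = s then 1 else if i = s \<and> j = r then -1 else 0) / sqrt 2)"

definition soIdx :: "nat \<Rightarrow> (nat \<times> nat) set" where
  "soIdx N = {(r, s). r < s \<and> s < N}"

text \<open>Curve t |-> x exp(t Y) through x along the left-invariant field generated by Y.\<close>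
definition lcurve :: "nat \<Rightarrow> rmat \<Rightarrow> rmat \<Rightarrow> real \<Rightarrow> rmat" where
  "lcurve N x Y t = mmult N x (mexp N (\<lambda>i j. t * Y i j))"

text \<open>Tension field (Laplace-Beltrami operator) on SO(N) with the bi-invariant metric
  g(X,Y) = trace(X^t Y): tau(phi) = sum over an orthonormal basis {Y} of so(N) of Y^2(phi),
  where Y acts as the left-invariant vector field.\<close>
definition tensionSO :: "nat \<Rightarrow> (rmat \<Rightarrow> real) \<Rightarrow> rmat \<Rightarrow> real" where
  "tensionSO N \<phi> x = (\<Sum>(r,s)\<in>soIdx N. deriv (deriv (\<lambda>t. \<phi> (lcurve N x (soBasis r s) t))) 0)"

text \<open>Conformality operator kappa(phi,psi) = g(grad phi, grad psi) = sum_Y Y(phi) Y(psi).\<close>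
definition kappaSO :: "nat \<Rightarrow> (rmat \<Rightarrow> real) \<Rightarrow> (rmat \<Rightarrow> real) \<Rightarrow> rmat \<Rightarrow> real" where
  "kappaSO N \<phi> \<psi> x = (\<Sum>(r,s)\<in>soIdx N.
       deriv (\<lambda>t. \<phi> (lcurve N x (soBasis r s) t)) 0 * deriv (\<lambda>t. \<psi> (lcurve N x (soBasis r s) t)) 0)"

text \<open>hat phi_{j alpha}(x) = sum_{t=1}^m x_{jt} x_{alpha t}  (0-based here).\<close>
definition phiHat :: "nat \<Rightarrow> nat \<Rightarrow> nat \<Rightarrow> rmat \<Rightarrow> real" where
  "phiHat m j a x = (\<Sum>t<m. x j t * x a t)"

definition kdelta :: "nat \<Rightarrow> nat \<Rightarrow> real" where
  "kdelta i j = (if i = j then 1 else 0)"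

end

theory Submission imports Defs "Jordan_Normal_Form.Determinant" begin
lemma rows_orth:
  assumes "\<forall>i<N. \<forall>j<N. mmult N (mtrans x) x i j = mid i j" "i < N" "j < N"
  shows "(\<Sum>k<N. x i k * x j k) = (if i = j then 1 else 0)"
proof -
  define A where "A = mat N N (\<lambda>(i,j). x j i)"
  define B where "B = mat N N (\<lambda>(i,j). x i j)"
  have AB: "A * B = 1\<^sub>m N"
  proof (rule eq_matI)
    fix i j assume "i < dim_row (1\<^sub>m N)" "j < dim_col (1\<^sub>m N)"
    then have ij: "i < N" "j < N" by auto
    have "(A * B) $$ (i,j) = (\<Sum>k<N. x k i * x k j)"
      using ij by (simp add: A_def B_def scalar_prod_def atLeast0LessThan)
    also have "\<dots> = mid i j" using assms(1) ij by (simp add: mmult_def mtrans_def)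
    finally show "(A * B) $$ (i,j) = 1\<^sub>m N $$ (i,j)" using ij by (simp add: mid_def)
  qed (auto simp: A_def B_def)
  have "B * A = 1\<^sub>m N"
    by (rule mat_mult_left_right_inverse[OF _ _ AB]) (auto simp: A_def B_def)
  then have "(B * A) $$ (i,j) = 1\<^sub>m N $$ (i,j)" by simp
  then show ?thesis using assms(2,3)
    by (simp add: A_def B_def scalar_prod_def atLeast0LessThan)
qed

definition Y2 :: "nat \<Rightarrow> nat \<Rightarrow> rmat" where
  "Y2 r s = (\<lambda>i j. if i = j \<and> (i = r \<or> i = s) then -1/2 else 0)"

lemma sum_two_delta:
  fixes r s N :: nat and A B :: real
  assumes "r \<noteq> s" "r < N" "s < N"
  shows "(\<Sum>k<N. (if k = r then A else 0) + (if k = s then B else 0)) = A + B"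
  using assms by (simp add: sum.distrib sum.delta sum.delta')

lemma YY: assumes "r < s" "s < N"
  shows "mmult N (soBasis r s) (soBasis r s) = Y2 r s"
proof (intro ext)
  fix i j
  have "mmult N (soBasis r s) (soBasis r s) i j =
     (\<Sum>k<N. (if k = r then soBasis r s i r * soBasis r s r j else 0) + (if k = s then soBasis r s i s * soBasis r s s j else 0))"
    unfolding mmult_def
  proof (rule sum.cong[OF refl])
    fix k
    have z: "k \<noteq> r \<Longrightarrow> k \<noteq> s \<Longrightarrow> soBasis r s k j = 0" by (simp add: soBasis_def)
    show "soBasis r s i k * soBasis r s k j = (if k = r then soBasis r s i r * soBasis r s r j else 0) + (if k = s then soBasis r s i s * soBasis r s s j else 0)"
      using assms z by (cases "k = r"; cases "k = s") auto
  qed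
  also have "\<dots> = soBasis r s i r * soBasis r s r j + soBasis r s i s * soBasis r s s j"
    using assms by (intro sum_two_delta) auto
  also have "\<dots> = Y2 r s i j" using assms by (auto simp: soBasis_def Y2_def)
  finally show "mmult N (soBasis r s) (soBasis r s) i j = Y2 r s i j" .
qed

lemma Y2Y: assumes "r < s" "s < N"
  shows "mmult N (Y2 r s) (soBasis r s) = (\<lambda>i j. -1/2 * soBasis r s i j)"
proof (intro ext)
  fix i j
  have "mmult N (Y2 r s) (soBasis r s) i j =
     (\<Sum>k<N. (if k = r then Y2 r s i r * soBasis r s r j else 0) + (if k = s then Y2 r s i s * soBasis r s s j else 0))"
    unfolding mmult_def
  proof (rule sum.cong[OF refl])
    fix k
    have z: "k \<noteq> r \<Longrightarrow> k \<noteq> s \<Longrightarrow> Y2 r s i k = 0" by (simp add: Y2_def)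
    show "Y2 r s i k * soBasis r s k j = (if k = r then Y2 r s i r * soBasis r s r j else 0) + (if k = s then Y2 r s i s * soBasis r s s j else 0)"
      using assms z by (cases "k = r"; cases "k = s") auto
  qed
  also have "\<dots> = Y2 r s i r * soBasis r s r j + Y2 r s i s * soBasis r s s j"
    using assms by (intro sum_two_delta) auto
  also have "\<dots> = -1/2 * soBasis r s i j" using assms by (auto simp: soBasis_def Y2_def)
  finally show "mmult N (Y2 r s) (soBasis r s) i j = -1/2 * soBasis r s i j" .
qed

lemma midY: assumes "r < s" "s < N"
  shows "mmult N mid (soBasis r s) = soBasis r s"
proof (intro ext)
  fix i j
  show "mmult N mid (soBasis r s) i j = soBasis r s i j"
  proof (cases "i < N")
    case True then show ?thesis unfolding mmult_def mid_def
      by (simp add: if_distrib[where f="\<lambda>u. u * _"] sum.delta cong: if_cong)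
  next
    case False then show ?thesis using assms unfolding mmult_def mid_def soBasis_def by auto
  qed
qed

lemma mpow_scale: "mpow N (\<lambda>i j. t * A i j) k = (\<lambda>i j. t^k * mpow N A k i j)"
proof (induction k)
  case 0 then show ?case by (simp add: mid_def)
next
  case (Suc k) then show ?case
    by (simp add: mmult_def sum_distrib_left mult_ac)
qed

lemma mmult_scale_left: "mmult N (\<lambda>i j. c * A i j) B = (\<lambda>i j. c * mmult N A B i j)"
  by (simp add: mmult_def sum_distrib_left mult_ac)

lemma mpow_Y: assumes "r < s" "s < N"
  shows "mpow N (soBasis r s) (2*l+1) = (\<lambda>i j. (-1/2)^l * soBasis r s i j)
       \<and> mpow N (soBasis r s) (2*l+2) = (\<lambda>i j. (-1/2)^l * Y2 r s i j)"
proof (induction l)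
  case 0 then show ?case using assms by (simp add: midY YY numeral_2_eq_2)
next
  case (Suc l)
  have e1: "2 * Suc l + 1 = Suc (2*l+2)" by simp
  have e2: "2 * Suc l + 2 = Suc (Suc (2*l+2))" by simp
  have IH2: "mpow N (soBasis r s) (2*l+2) = (\<lambda>i j. (-1/2)^l * Y2 r s i j)" using Suc by blast
  have A: "mpow N (soBasis r s) (2 * Suc l + 1) = (\<lambda>i j. (-1/2)^Suc l * soBasis r s i j)"
    unfolding e1 mpow.simps(2) IH2 mmult_scale_left Y2Y[OF assms] by simp
  moreover have "mpow N (soBasis r s) (2 * Suc l + 2) = (\<lambda>i j. (-1/2)^Suc l * Y2 r s i j)"
  proof -
    have "mpow N (soBasis r s) (2 * Suc l + 2) = mmult N (mpow N (soBasis r s) (2 * Suc l + 1)) (soBasis r s)"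
      unfolding e2 e1 by simp
    then show ?thesis unfolding A mmult_scale_left YY[OF assms] by simp
  qed
  ultimately show ?case by blast
qed



definition Ft :: "real \<Rightarrow> real" where "Ft t = sqrt 2 * sin (t / sqrt 2)"
definition Gt :: "real \<Rightarrow> real" where "Gt t = 2 * (1 - cos (t / sqrt 2))"

lemma sqrt2_pow_even: "sqrt 2 ^ (2*l) = (2::real)^l"
  by (simp add: power_mult)

lemma half_pow: "(-(1/2::real))^l = (-1)^l / 2^l" by (metis minus_divide_left power_divide)

lemma term_eq:
  assumes "r < s" "s < N"
  shows "mpow N (\<lambda>i j. t * soBasis r s i j) k i j / fact k =
     (if k = 0 then mid i j else 0) + soBasis r s i j * (sqrt 2 * (sin_coeff k * (t / sqrt 2)^k))
     + Y2 r s i j * (2 * ((if k = 0 then 1 else 0) - cos_coeff k * (t / sqrt 2)^k))"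
proof -
  have sc: "mpow N (\<lambda>i j. t * soBasis r s i j) k i j = t^k * mpow N (soBasis r s) k i j"
    by (simp add: mpow_scale)
  have "k = 0 \<or> (\<exists>l. k = 2*l+1) \<or> (\<exists>l. k = 2*l+2)" by presburger
  then consider "k = 0" | l where "k = 2*l+1" | l where "k = 2*l+2" by blast
  then show ?thesis
  proof cases
    case 1 then show ?thesis by (simp add: sc)
  next
    case 2
    have p: "mpow N (soBasis r s) k i j = (-1/2)^l * soBasis r s i j"
      using mpow_Y[OF assms, of l] 2 by simp
    have sp: "(t / sqrt 2)^k = t^k / (2^l * sqrt 2)"
      unfolding 2 power_divide by (simp add: power_add sqrt2_pow_even)
    have c1: "sin_coeff k = (-1)^l / fact k" using 2 by (simp add: sin_coeff_def)
    have c2: "cos_coeff k = 0" using 2 by (simp add: cos_coeff_def)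
    have "k \<noteq> 0" using 2 by simp
    then show ?thesis unfolding sc p sp c1 c2
      by (simp add: power_divide half_pow mult_ac)
  next
    case 3
    have p: "mpow N (soBasis r s) k i j = (-1/2)^l * Y2 r s i j"
      unfolding 3 conjunct2[OF mpow_Y[OF assms, of l]] by simp
    have sp: "(t / sqrt 2)^k = t^k / (2 * 2^l)"
    proof -
      have "k = 2 * (l+1)" using 3 by simp
      then show ?thesis unfolding power_divide by (simp only: sqrt2_pow_even) simp
    qed
    have c1: "cos_coeff k = (-1)^(l+1) / fact k" using 3 by (simp add: cos_coeff_def)
    have c2: "sin_coeff k = 0" using 3 by (simp add: sin_coeff_def)
    have "k \<noteq> 0" using 3 by simp
    then show ?thesis unfolding sc p sp c1 c2
      by (simp add: power_divide half_pow mult_ac)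
  qed
qed

lemma mexp_Y:
  assumes "r < s" "s < N"
  shows "mexp N (\<lambda>i j. t * soBasis r s i j) i j = mid i j + Ft t * soBasis r s i j + Gt t * Y2 r s i j"
proof -
  have s1: "(\<lambda>k. if k = 0 then mid i j else 0) sums mid i j"
    using sums_single[of 0 "\<lambda>_. mid i j"] by simp
  have ss: "(\<lambda>n. sin_coeff n * (t / sqrt 2)^n) sums sin (t / sqrt 2)"
    using sin_converges[of "t / sqrt 2"] by simp
  have cs: "(\<lambda>n. cos_coeff n * (t / sqrt 2)^n) sums cos (t / sqrt 2)"
    using cos_converges[of "t / sqrt 2"] by simp
  have s2: "(\<lambda>k. soBasis r s i j * (sqrt 2 * (sin_coeff k * (t / sqrt 2)^k))) sums (soBasis r s i j * Ft t)"
    unfolding Ft_def by (intro sums_mult ss)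
  have s3: "(\<lambda>k. Y2 r s i j * (2 * ((if k = 0 then 1 else 0) - cos_coeff k * (t / sqrt 2)^k))) sums (Y2 r s i j * Gt t)"
    unfolding Gt_def
    by (intro sums_mult sums_diff cs) (use sums_single[of 0 "\<lambda>_. 1::real"] in simp)
  have "(\<lambda>k. mpow N (\<lambda>i j. t * soBasis r s i j) k i j / fact k) sums (mid i j + soBasis r s i j * Ft t + Y2 r s i j * Gt t)"
    unfolding term_eq[OF assms] by (intro sums_add s1 s2 s3)
  then show ?thesis unfolding mexp_def by (simp add: sums_iff mult_ac)
qed


lemma s2x: "(x::real) * 2 / sqrt 2 = x * sqrt 2"
proof -
  have "sqrt 2 * sqrt 2 = (2::real)" by simp
  then show ?thesis by (metis divide_eq_eq mult.assoc real_sqrt_eq_zero_cancel_iff zero_neq_numeral)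
qed
lemma lin_deriv: "((\<lambda>t. t / sqrt 2) has_real_derivative 1 / sqrt 2) (at t)"
  by (intro DERIV_cdivide DERIV_ident)
lemma sin_d: "((\<lambda>t. sin (t / sqrt 2)) has_real_derivative cos (t / sqrt 2) * (1 / sqrt 2)) (at t)"
  by (rule DERIV_fun_sin[OF lin_deriv])
lemma cos_d: "((\<lambda>t. cos (t / sqrt 2)) has_real_derivative - sin (t / sqrt 2) * (1 / sqrt 2)) (at t)"
  by (rule DERIV_fun_cos[OF lin_deriv])
lemma sq2: "sqrt 2 * (1 / sqrt 2) = (1::real)" by simp
lemma Ft_deriv: "(Ft has_real_derivative cos (t / sqrt 2)) (at t)"
proof -
  have "(Ft has_real_derivative sqrt 2 * (cos (t / sqrt 2) * (1 / sqrt 2))) (at t)"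
    unfolding Ft_def by (intro DERIV_cmult sin_d)
  then show ?thesis by (simp add: mult.left_commute[of "sqrt 2"])
qed
lemma Gt_deriv: "(Gt has_real_derivative sqrt 2 * sin (t / sqrt 2)) (at t)"
proof -
  have "(Gt has_real_derivative 2 * (0 - (- sin (t / sqrt 2) * (1 / sqrt 2)))) (at t)"
    unfolding Gt_def by (intro DERIV_cmult DERIV_diff DERIV_const cos_d)
  moreover have "2 * (0 - (- sin (t / sqrt 2) * (1 / sqrt 2))) = sqrt 2 * sin (t / sqrt 2)"
    using s2x[of "sin (t / sqrt 2)"] by (simp add: mult.commute)
  ultimately show ?thesis by simp
qed
lemma F1_deriv: "((\<lambda>t. cos (t / sqrt 2)) has_real_derivative - sin (t / sqrt 2) / sqrt 2) (at t)"
  using cos_d by simp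
lemma G1_deriv: "((\<lambda>t. sqrt 2 * sin (t / sqrt 2)) has_real_derivative cos (t / sqrt 2)) (at t)"
proof -
  have "((\<lambda>t. sqrt 2 * sin (t / sqrt 2)) has_real_derivative sqrt 2 * (cos (t / sqrt 2) * (1 / sqrt 2))) (at t)"
    by (intro DERIV_cmult sin_d)
  then show ?thesis by (simp add: mult.left_commute[of "sqrt 2"])
qed

lemma deriv_gen:
  fixes p q w p' q' w' :: "nat \<Rightarrow> real" and m :: nat
  defines "h \<equiv> \<lambda>t. \<Sum>l<m. (p l + Ft t * q l + Gt t * w l) * (p' l + Ft t * q' l + Gt t * w' l)"
  shows "deriv h 0 = (\<Sum>l<m. q l * p' l + p l * q' l)"
    and "deriv (deriv h) 0 = (\<Sum>l<m. w l * p' l + 2 * (q l * q' l) + p l * w' l)"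
proof -
  define F1 where "F1 = (\<lambda>t. cos (t / sqrt 2))"
  define G1 where "G1 = (\<lambda>t::real. sqrt 2 * sin (t / sqrt 2))"
  define h1 where "h1 = (\<lambda>t. \<Sum>l<m. (F1 t * q l + G1 t * w l) * (p' l + Ft t * q' l + Gt t * w' l)
                               + (p l + Ft t * q l + Gt t * w l) * (F1 t * q' l + G1 t * w' l))"
  have dF: "\<And>t. (Ft has_real_derivative F1 t) (at t)" unfolding F1_def by (rule Ft_deriv)
  have dG: "\<And>t. (Gt has_real_derivative G1 t) (at t)" unfolding G1_def by (rule Gt_deriv)
  have dF1: "\<And>t. (F1 has_real_derivative - sin (t / sqrt 2) / sqrt 2) (at t)" unfolding F1_def by (rule F1_deriv)
  have dG1: "\<And>t. (G1 has_real_derivative cos (t / sqrt 2)) (at t)" unfolding G1_def by (rule G1_deriv)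
  have du: "\<And>a b c t. ((\<lambda>t. a + Ft t * b + Gt t * c) has_real_derivative F1 t * b + G1 t * c) (at t)"
  proof -
    fix a b c t
    have "((\<lambda>t. a + Ft t * b + Gt t * c) has_real_derivative 0 + F1 t * b + G1 t * c) (at t)"
      by (intro DERIV_add DERIV_const DERIV_cmult_right dF dG)
    then show "((\<lambda>t. a + Ft t * b + Gt t * c) has_real_derivative F1 t * b + G1 t * c) (at t)" by simp
  qed
  have du1: "\<And>a b t. ((\<lambda>t. F1 t * a + G1 t * b) has_real_derivative (- sin (t / sqrt 2) / sqrt 2) * a + cos (t / sqrt 2) * b) (at t)"
    by (intro DERIV_add DERIV_const DERIV_cmult_right dF1 dG1)
  have dh: "\<And>t. (h has_real_derivative h1 t) (at t)"
    unfolding h_def h1_def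
    by (rule DERIV_sum, rule DERIV_cong, rule DERIV_mult[OF du du]) (simp add: algebra_simps)
  then have dh': "deriv h = h1" by (intro ext DERIV_imp_deriv)
  have F0: "Ft 0 = 0" "Gt 0 = 0" "F1 0 = 1" "G1 0 = 0" by (simp_all add: Ft_def Gt_def F1_def G1_def)
  show "deriv h 0 = (\<Sum>l<m. q l * p' l + p l * q' l)"
    unfolding dh' h1_def by (simp add: F0)
  define h2 where "h2 = (\<lambda>t. \<Sum>l<m. (- sin (t / sqrt 2) / sqrt 2 * q l + cos (t / sqrt 2) * w l) * (p' l + Ft t * q' l + Gt t * w' l)
                               + (F1 t * q l + G1 t * w l) * (F1 t * q' l + G1 t * w' l)
                               + (F1 t * q l + G1 t * w l) * (F1 t * q' l + G1 t * w' l)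
                               + (p l + Ft t * q l + Gt t * w l) * (- sin (t / sqrt 2) / sqrt 2 * q' l + cos (t / sqrt 2) * w' l))"
  have "(h1 has_real_derivative h2 0) (at 0)"
    unfolding h1_def h2_def
    by (rule DERIV_sum, rule DERIV_cong, rule DERIV_add[OF DERIV_mult[OF du1 du] DERIV_mult[OF du du1]])
       (simp add: algebra_simps)
  then have "deriv h1 0 = h2 0" by (rule DERIV_imp_deriv)
  then show "deriv (deriv h) 0 = (\<Sum>l<m. w l * p' l + 2 * (q l * q' l) + p l * w' l)"
    unfolding dh' h2_def by (simp add: F0 algebra_simps)
qed


lemma soIdx_sum: "(\<Sum>(r,s)\<in>soIdx N. g r s) = (\<Sum>s<N. \<Sum>r<s. g r s)"
proof (induction N)
  case 0 then show ?case by (simp add: soIdx_def)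
next
  case (Suc N)
  have e: "soIdx (Suc N) = soIdx N \<union> (\<lambda>r. (r, N)) ` {..<N}"
    by (auto simp: soIdx_def)
  have d: "soIdx N \<inter> (\<lambda>r. (r, N)) ` {..<N} = {}" by (auto simp: soIdx_def)
  have f: "finite (soIdx N)"
    by (rule finite_subset[of _ "{..<N} \<times> {..<N}"]) (auto simp: soIdx_def)
  have "(\<Sum>(r,s)\<in>soIdx (Suc N). g r s) = (\<Sum>(r,s)\<in>soIdx N. g r s) + (\<Sum>(r,s)\<in>(\<lambda>r. (r, N)) ` {..<N}. g r s)"
    unfolding e by (rule sum.union_disjoint[OF f _ d]) simp
  also have "(\<Sum>(r,s)\<in>(\<lambda>r. (r, N)) ` {..<N}. g r s) = (\<Sum>r<N. g r N)"
    by (subst sum.reindex) (auto simp: inj_on_def)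
  finally show ?case using Suc by simp
qed

lemma sym_sum:
  fixes g :: "nat \<Rightarrow> nat \<Rightarrow> real" and N :: nat
  shows "(\<Sum>s<N. \<Sum>r<s. g r s + g s r) = (\<Sum>r<N. \<Sum>s<N. g r s) - (\<Sum>r<N. g r r)"
proof (induction N)
  case 0 then show ?case by simp
next
  case (Suc N)
  then show ?case by (simp add: sum.distrib algebra_simps)
qed

lemma sum_If_less:
  fixes c :: "nat \<Rightarrow> real"
  assumes "m \<le> N"
  shows "(\<Sum>s<N. (if s < m then c s else 0)) = (\<Sum>s<m. c s)"
proof -
  have "(\<Sum>s<N. (if s < m then c s else 0)) = (\<Sum>s\<in>{..<N} \<inter> {s. s < m}. c s)"
    by (simp add: sum.inter_restrict)
  also have "{..<N} \<inter> {s. s < m} = {..<m}" using assms by auto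
  finally show ?thesis .
qed

lemma sep_sum:
  fixes P a b :: "nat \<Rightarrow> real"
  shows "(\<Sum>r<N. \<Sum>s<N. (P s + P r - 2 * P r * P s) * (a r * b s)) =
     (\<Sum>r<N. a r) * (\<Sum>s<N. P s * b s) + (\<Sum>r<N. P r * a r) * (\<Sum>s<N. b s)
     - 2 * ((\<Sum>r<N. P r * a r) * (\<Sum>s<N. P s * b s))"
proof -
  have e1: "(\<Sum>r<N. \<Sum>s<N. P s * a r * b s) = (\<Sum>r<N. a r) * (\<Sum>s<N. P s * b s)"
    unfolding sum_product by (simp add: mult_ac)
  have e2: "(\<Sum>r<N. \<Sum>s<N. P r * a r * b s) = (\<Sum>r<N. P r * a r) * (\<Sum>s<N. b s)"
    unfolding sum_product by (simp add: mult_ac)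
  have e3: "(\<Sum>r<N. \<Sum>s<N. P r * P s * a r * b s) = (\<Sum>r<N. P r * a r) * (\<Sum>s<N. P s * b s)"
    unfolding sum_product by (simp add: mult_ac)
  have "(\<Sum>r<N. \<Sum>s<N. (P s + P r - 2 * P r * P s) * (a r * b s)) =
     (\<Sum>r<N. \<Sum>s<N. P s * a r * b s) + (\<Sum>r<N. \<Sum>s<N. P r * a r * b s) - 2 * (\<Sum>r<N. \<Sum>s<N. P r * P s * a r * b s)"
    by (simp add: sum.distrib sum_subtractf sum_distrib_left algebra_simps)
  then show ?thesis unfolding e1 e2 e3 .
qed

lemma sum_two_pts:
  fixes f :: "nat \<Rightarrow> real" and r s m :: nat
  assumes "r \<noteq> s" "\<And>l. l \<noteq> r \<Longrightarrow> l \<noteq> s \<Longrightarrow> f l = 0"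
  shows "(\<Sum>l<m. f l) = (if r < m then f r else 0) + (if s < m then f s else 0)"
proof -
  have "(\<Sum>l<m. f l) = (\<Sum>l<m. (if l = r then f r else 0) + (if l = s then f s else 0))"
    by (rule sum.cong[OF refl]) (use assms in auto)
  also have "\<dots> = (if r < m then f r else 0) + (if s < m then f s else 0)"
    by (simp add: sum.distrib sum.delta)
  finally show ?thesis .
qed

lemma X1_eq:
  assumes "r < s" "s < N"
  shows "mmult N x (soBasis r s) i l = (if l = s then x i r / sqrt 2 else 0) + (if l = r then - x i s / sqrt 2 else 0)"
proof -
  have "mmult N x (soBasis r s) i l = (if r < N then x i r * soBasis r s r l else 0) + (if s < N then x i s * soBasis r s s l else 0)"
    unfolding mmult_def using assms
    by (intro sum_two_pts) (auto simp: soBasis_def)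
  then show ?thesis using assms by (auto simp: soBasis_def)
qed

lemma X2_eq:
  assumes "r < s" "s < N"
  shows "mmult N x (Y2 r s) i l = (if l = r then - x i r / 2 else 0) + (if l = s then - x i s / 2 else 0)"
proof -
  have "mmult N x (Y2 r s) i l = (if r < N then x i r * Y2 r s r l else 0) + (if s < N then x i s * Y2 r s s l else 0)"
    unfolding mmult_def using assms
    by (intro sum_two_pts) (auto simp: Y2_def)
  then show ?thesis using assms by (auto simp: Y2_def)
qed

lemma lcurve_eq:
  assumes "r < s" "s < N" "l < N"
  shows "lcurve N x (soBasis r s) t i l = x i l + Ft t * mmult N x (soBasis r s) i l + Gt t * mmult N x (Y2 r s) i l"
proof -
  have "lcurve N x (soBasis r s) t i l = (\<Sum>k<N. x i k * (mid k l + Ft t * soBasis r s k l + Gt t * Y2 r s k l))"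
    unfolding lcurve_def by (simp add: mmult_def mexp_Y[OF assms(1,2)])
  also have "\<dots> = (\<Sum>k<N. x i k * mid k l) + Ft t * mmult N x (soBasis r s) i l + Gt t * mmult N x (Y2 r s) i l"
    by (simp add: mmult_def algebra_simps sum.distrib sum_distrib_left)
  also have "(\<Sum>k<N. x i k * mid k l) = x i l"
    using assms(3) by (simp add: mid_def if_distrib[where f="\<lambda>u. _ * u"] sum.delta' cong: if_cong)
  finally show ?thesis .
qed


lemma phi_curve:
  assumes "r < s" "s < N" "m \<le> N"
  shows "(\<lambda>t. phiHat m j a (lcurve N x (soBasis r s) t)) =
    (\<lambda>t. \<Sum>l<m. (x j l + Ft t * mmult N x (soBasis r s) j l + Gt t * mmult N x (Y2 r s) j l) *
                 (x a l + Ft t * mmult N x (soBasis r s) a l + Gt t * mmult N x (Y2 r s) a l))"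
  unfolding phiHat_def
  by (intro ext sum.cong refl) (use assms in \<open>simp add: lcurve_eq\<close>)

lemma D1_eq:
  assumes "r < s" "s < N" "m \<le> N"
  shows "deriv (\<lambda>t. phiHat m j a (lcurve N x (soBasis r s) t)) 0 =
    (if r < m then - (x j s * x a r + x j r * x a s) / sqrt 2 else 0) +
    (if s < m then (x j r * x a s + x j s * x a r) / sqrt 2 else 0)"
proof -
  have "deriv (\<lambda>t. phiHat m j a (lcurve N x (soBasis r s) t)) 0 =
     (\<Sum>l<m. mmult N x (soBasis r s) j l * x a l + x j l * mmult N x (soBasis r s) a l)"
    unfolding phi_curve[OF assms] by (rule deriv_gen(1))
  also have "\<dots> = (if r < m then - (x j s * x a r + x j r * x a s) / sqrt 2 else 0) +
    (if s < m then (x j r * x a s + x j s * x a r) / sqrt 2 else 0)"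
    using assms by (subst sum_two_pts[of r s]) (auto simp: X1_eq field_simps)
  finally show ?thesis .
qed

lemma D2_eq:
  assumes "r < s" "s < N" "m \<le> N"
  shows "deriv (deriv (\<lambda>t. phiHat m j a (lcurve N x (soBasis r s) t))) 0 =
    (if r < m then x j s * x a s - x j r * x a r else 0) +
    (if s < m then x j r * x a r - x j s * x a s else 0)"
proof -
  have "deriv (deriv (\<lambda>t. phiHat m j a (lcurve N x (soBasis r s) t))) 0 =
     (\<Sum>l<m. mmult N x (Y2 r s) j l * x a l + 2 * (mmult N x (soBasis r s) j l * mmult N x (soBasis r s) a l) + x j l * mmult N x (Y2 r s) a l)"
    unfolding phi_curve[OF assms] by (rule deriv_gen(2))
  also have "\<dots> = (if r < m then x j s * x a s - x j r * x a r else 0) +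
    (if s < m then x j r * x a r - x j s * x a s else 0)"
    using assms by (subst sum_two_pts[of r s]) (auto simp: X1_eq X2_eq field_simps)
  finally show ?thesis .
qed


lemma tension_main:
  assumes "m \<le> N"
    and orth: "\<And>i i'. i < N \<Longrightarrow> i' < N \<Longrightarrow> (\<Sum>l<N. x i l * x i' l) = kdelta i i'"
    and "j < N" "a < N"
  shows "tensionSO N (phiHat m j a) x = - real N * phiHat m j a x + kdelta j a * real m"
proof -
  define P where "P = (\<lambda>l::nat. if l < m then 1 else (0::real))"
  define z where "z = (\<lambda>l. x j l * x a l)"
  define g where "g = (\<lambda>r s. P s * z r - P r * z r)"
  have "tensionSO N (phiHat m j a) x = (\<Sum>s<N. \<Sum>r<s. deriv (deriv (\<lambda>t. phiHat m j a (lcurve N x (soBasis r s) t))) 0)"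
    unfolding tensionSO_def by (rule soIdx_sum)
  also have "\<dots> = (\<Sum>s<N. \<Sum>r<s. g r s + g s r)"
  proof (intro sum.cong refl)
    fix s r assume "s \<in> {..<N}" "r \<in> {..<s}"
    then have "r < s" "s < N" by auto
    then show "deriv (deriv (\<lambda>t. phiHat m j a (lcurve N x (soBasis r s) t))) 0 = g r s + g s r"
      unfolding D2_eq[OF \<open>r < s\<close> \<open>s < N\<close> assms(1)] g_def P_def z_def by (auto simp: algebra_simps)
  qed
  also have "\<dots> = (\<Sum>r<N. \<Sum>s<N. g r s) - (\<Sum>r<N. g r r)" by (rule sym_sum)
  also have "(\<Sum>r<N. g r r) = 0" by (simp add: g_def)
  also have "(\<Sum>r<N. \<Sum>s<N. g r s) = (\<Sum>r<N. z r * (\<Sum>s<N. P s) - real N * (P r * z r))"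
    unfolding g_def by (simp add: sum_subtractf sum_distrib_left sum_distrib_right mult_ac)
  also have "(\<Sum>s<N. P s) = real m"
    unfolding P_def using sum_If_less[OF assms(1), of "\<lambda>_. 1"] by simp
  also have "(\<Sum>r<N. z r * real m - real N * (P r * z r)) = real m * (\<Sum>r<N. z r) - real N * (\<Sum>r<N. P r * z r)"
    by (simp add: sum_subtractf sum_distrib_left mult_ac)
  also have "(\<Sum>r<N. z r) = kdelta j a" unfolding z_def using orth assms by simp
  also have "(\<Sum>r<N. P r * z r) = phiHat m j a x"
    unfolding P_def z_def phiHat_def using sum_If_less[OF assms(1), of "\<lambda>l. x j l * x a l"]
    by (simp add: if_distrib[where f="\<lambda>u. u * _"] cong: if_cong)
  finally show ?thesis by simp
qed


lemma kappa_main: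
  assumes "m \<le> N"
    and orth: "\<And>i i'. i < N \<Longrightarrow> i' < N \<Longrightarrow> (\<Sum>l<N. x i l * x i' l) = kdelta i i'"
    and "j < N" "a < N" "k < N" "b < N"
  shows "kappaSO N (phiHat m j a) (phiHat m k b) x
      = - (phiHat m j b x * phiHat m k a x + phiHat m j k x * phiHat m a b x)
        + 1/2 * (kdelta j k * phiHat m a b x + kdelta a b * phiHat m j k x
                 + kdelta j b * phiHat m k a x + kdelta k a * phiHat m j b x)"
proof -
  define P where "P = (\<lambda>l::nat. if l < m then 1 else (0::real))"
  define c where "c = (\<lambda>j a r s. x j r * x a s + x j s * x a r)"
  define w where "w = (\<lambda>r s. P s + P r - 2 * P r * P s)"
  define g where "g = (\<lambda>r s. w r s * (c j a r s * c k b r s) / 4)"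
  define S where "S = (\<lambda>i i'. (\<Sum>l<N. x i l * x i' l))"
  define Q where "Q = (\<lambda>i i'. (\<Sum>l<N. P l * (x i l * x i' l)))"
  have S: "S i i' = kdelta i i'" if "i < N" "i' < N" for i i' unfolding S_def using orth that by simp
  have Q: "Q i i' = phiHat m i i' x" for i i'
    unfolding P_def Q_def phiHat_def using sum_If_less[OF assms(1), of "\<lambda>l. x i l * x i' l"]
    by (simp add: if_distrib[where f="\<lambda>u. u * _"] cong: if_cong)
  have "kappaSO N (phiHat m j a) (phiHat m k b) x = (\<Sum>s<N. \<Sum>r<s.
      deriv (\<lambda>t. phiHat m j a (lcurve N x (soBasis r s) t)) 0 * deriv (\<lambda>t. phiHat m k b (lcurve N x (soBasis r s) t)) 0)"
    unfolding kappaSO_def by (rule soIdx_sum)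
  also have "\<dots> = (\<Sum>s<N. \<Sum>r<s. g r s + g s r)"
  proof (intro sum.cong refl)
    fix s r assume "s \<in> {..<N}" "r \<in> {..<s}"
    then have rs: "r < s" "s < N" by auto
    have sq: "sqrt 2 * (sqrt 2 * y) = 2 * (y::real)" for y by (simp add: mult.assoc[symmetric])
    show "deriv (\<lambda>t. phiHat m j a (lcurve N x (soBasis r s) t)) 0 * deriv (\<lambda>t. phiHat m k b (lcurve N x (soBasis r s) t)) 0 = g r s + g s r"
      unfolding D1_eq[OF rs assms(1)] g_def w_def P_def c_def
      using rs by (auto simp: field_simps sq)
  qed
  also have "\<dots> = (\<Sum>r<N. \<Sum>s<N. g r s) - (\<Sum>r<N. g r r)" by (rule sym_sum)
  also have "(\<Sum>r<N. g r r) = 0"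
    by (rule sum.neutral) (simp add: g_def w_def P_def)
  also have "(\<Sum>r<N. \<Sum>s<N. g r s) = (1/4) * (
        (\<Sum>r<N. \<Sum>s<N. w r s * ((x j r * x k r) * (x a s * x b s)))
      + (\<Sum>r<N. \<Sum>s<N. w r s * ((x j r * x b r) * (x k s * x a s)))
      + (\<Sum>r<N. \<Sum>s<N. w r s * ((x k r * x a r) * (x j s * x b s)))
      + (\<Sum>r<N. \<Sum>s<N. w r s * ((x a r * x b r) * (x j s * x k s))))"
  proof -
    have "(\<Sum>r<N. \<Sum>s<N. g r s) = (\<Sum>r<N. \<Sum>s<N. (1/4) * (
        w r s * ((x j r * x k r) * (x a s * x b s))
      + w r s * ((x j r * x b r) * (x k s * x a s))
      + w r s * ((x k r * x a r) * (x j s * x b s))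
      + w r s * ((x a r * x b r) * (x j s * x k s))))"
      by (intro sum.cong refl) (simp add: g_def c_def algebra_simps)
    then show ?thesis by (simp only: sum_distrib_left[symmetric] sum.distrib)
  qed
  also have "\<dots> = (1/4) * (
        (S j k * Q a b + Q j k * S a b - 2 * (Q j k * Q a b))
      + (S j b * Q k a + Q j b * S k a - 2 * (Q j b * Q k a))
      + (S k a * Q j b + Q k a * S j b - 2 * (Q k a * Q j b))
      + (S a b * Q j k + Q a b * S j k - 2 * (Q a b * Q j k)))"
    unfolding w_def S_def Q_def sep_sum ..
  finally show ?thesis using assms by (simp add: S Q algebra_simps)
qed

theorem lemma3p2:
  fixes m n :: nat
  assumes "0 < m" and "0 < n"
  shows "\<forall>x\<in>SO (m + n). \<forall>j<m+n. \<forall>k<m+n. \<forall>a<m+n. \<forall>b<m+n.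
    tensionSO (m + n) (phiHat m j a) x
      = - real (m + n) * phiHat m j a x + kdelta j a * real m
  \<and> kappaSO (m + n) (phiHat m j a) (phiHat m k b) x
      = - (phiHat m j b x * phiHat m k a x + phiHat m j k x * phiHat m a b x)
        + 1/2 * (kdelta j k * phiHat m a b x + kdelta a b * phiHat m j k x
                 + kdelta j b * phiHat m k a x + kdelta k a * phiHat m j b x)"
proof (intro ballI allI impI)
  fix x j k a b
  assume x: "x \<in> SO (m + n)" and idx: "j < m + n" "k < m + n" "a < m + n" "b < m + n"
  have orth: "\<And>i i'. i < m + n \<Longrightarrow> i' < m + n \<Longrightarrow> (\<Sum>l<m + n. x i l * x i' l) = kdelta i i'"
    using rows_orth[of "m + n" x] x unfolding SO_def kdelta_def by blast
  have mn: "m \<le> m + n" by simp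
  show "tensionSO (m + n) (phiHat m j a) x
      = - real (m + n) * phiHat m j a x + kdelta j a * real m
  \<and> kappaSO (m + n) (phiHat m j a) (phiHat m k b) x
      = - (phiHat m j b x * phiHat m k a x + phiHat m j k x * phiHat m a b x)
        + 1/2 * (kdelta j k * phiHat m a b x + kdelta a b * phiHat m j k x
                 + kdelta j b * phiHat m k a x + kdelta k a * phiHat m j b x)"
    using tension_main[OF mn orth idx(1,3)] kappa_main[OF mn orth idx(1,3,2,4)] by blast
qed

end
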